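(* Let $f: X \to Y$ be an open perfect surjection (continuous, closed, with compact fibers) onto a set star Hurewicz space $Y$. Then $X$ is nearly set star Hurewicz.
   Context: For a subset $A$ of a space $X$ and a collection $\mathcal{U}$ of subsets of $X$, ${\rm St}(A,\mathcal{U}) = \bigcup\{U \in \mathcal{U}: U \cap A \neq \emptyset\}$. A space $Y$ is set star Hurewicz if for each nonempty $B \subset Y$ and each sequence $(\mathcal{V}_n: n\in\mathbb{N})$ of collections of sets open in $Y$ with $\overline{B} \subset \bigcup\mathcal{V}_n$ for all $n$, there are finite $\mathcal{W}_n \subset \mathcal{V}_n$ such that each $y \in B$ lies in ${\rm St}(\bigcup\mathcal{W}_n,\mathcal{V}_n)$ for all but finitely many $n$. A space $X$ is nearly set star Hurewicz if for each nonempty $A \subset X$ and each sequence $(\mathcal{U}_n: n\in\mathbb{N})$ of open covers of $X$ there are finite $\mathcal{V}_n \subset \mathcal{U}_n$ such that each $x \in A$ lies in ${\rm St}(\bigcup\mathcal{V}_n,\mathcal{U}_n)$ for all but finitely many $n$. *)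

theory Defs
  imports "HOL-Analysis.Analysis"
begin

definition star :: "'a set \<Rightarrow> 'a set set \<Rightarrow> 'a set" where
  "star A \<U> = \<Union>{U \<in> \<U>. U \<inter> A \<noteq> {}}"

definition set_star_Hurewicz :: "'a topology \<Rightarrow> bool" where
  "set_star_Hurewicz Y \<longleftrightarrow>
     (\<forall>B \<V>. B \<noteq> {} \<and> B \<subseteq> topspace Y \<and>
        (\<forall>n. (\<forall>V \<in> \<V> n. openin Y V) \<and> Y closure_of B \<subseteq> \<Union>(\<V> n)) \<longrightarrow>
        (\<exists>\<W>. (\<forall>n. finite (\<W> n) \<and> \<W> n \<subseteq> \<V> n) \<and>
             (\<forall>y \<in> B. eventually (\<lambda>n. y \<in> star (\<Union>(\<W> n)) (\<V> n)) sequentially)))"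

definition nearly_set_star_Hurewicz :: "'a topology \<Rightarrow> bool" where
  "nearly_set_star_Hurewicz X \<longleftrightarrow>
     (\<forall>A \<U>. A \<noteq> {} \<and> A \<subseteq> topspace X \<and>
        (\<forall>n. (\<forall>U \<in> \<U> n. openin X U) \<and> \<Union>(\<U> n) = topspace X) \<longrightarrow>
        (\<exists>\<V>. (\<forall>n. finite (\<V> n) \<and> \<V> n \<subseteq> \<U> n) \<and>
             (\<forall>x \<in> A. eventually (\<lambda>n. x \<in> star (\<Union>(\<V> n)) (\<U> n)) sequentially)))"

end

theory Submission
  imports Defs
begin

theorem theorem3p15:
  fixes X :: "'a topology" and Y :: "'b topology" and f :: "'a \<Rightarrow> 'b"
  assumes "open_map X Y f" and "perfect_map X Y f"
    and "set_star_Hurewicz Y"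
  shows "nearly_set_star_Hurewicz X"
  unfolding nearly_set_star_Hurewicz_def
proof (intro allI impI)
  fix A and \<U> :: "nat \<Rightarrow> 'a set set"
  assume H: "A \<noteq> {} \<and> A \<subseteq> topspace X \<and>
        (\<forall>n. (\<forall>U \<in> \<U> n. openin X U) \<and> \<Union>(\<U> n) = topspace X)"
  have om: "\<And>U. openin X U \<Longrightarrow> openin Y (f ` U)"
    using assms(1) by (simp add: open_map_def)
  have cm: "\<And>C. closedin X C \<Longrightarrow> closedin Y (f ` C)"
    using assms(2) by (simp add: perfect_map_def proper_map_def closed_map_def)
  have cpt: "\<And>y. y \<in> topspace Y \<Longrightarrow> compactin X {x \<in> topspace X. f x = y}"
    using assms(2) by (simp add: perfect_map_def proper_map_def)
  have surj: "f ` topspace X = topspace Y" and cont: "continuous_map X Y f"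
    using assms(2) by (auto simp: perfect_map_def)
  have exF: "\<exists>F. finite F \<and> F \<subseteq> \<U> n \<and> {x \<in> topspace X. f x = y} \<subseteq> \<Union>F
      \<and> (\<forall>U\<in>F. U \<inter> {x \<in> topspace X. f x = y} \<noteq> {})" if yY: "y \<in> topspace Y" for n y
  proof -
    obtain F where F: "finite F" "F \<subseteq> \<U> n" "{x \<in> topspace X. f x = y} \<subseteq> \<Union>F"
      using compactinD[OF cpt[OF yY], of "\<U> n"] H by auto
    show ?thesis
      apply (rule exI[of _ "{U\<in>F. U \<inter> {x \<in> topspace X. f x = y} \<noteq> {}}"]) 
    proof (intro conjI)
      show "{x \<in> topspace X. f x = y} \<subseteq> \<Union>{U\<in>F. U \<inter> {x \<in> topspace X. f x = y} \<noteq> {}}"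
      proof
        fix x assume x: "x \<in> {x \<in> topspace X. f x = y}"
        then obtain U where "U \<in> F" "x \<in> U" using F(3) by blast
        with x show "x \<in> \<Union>{U\<in>F. U \<inter> {x \<in> topspace X. f x = y} \<noteq> {}}" by blast
      qed
    qed (use F in auto)
  qed
  define F where "F (n::nat) y = (SOME F. finite F \<and> F \<subseteq> \<U> n \<and> {x \<in> topspace X. f x = y} \<subseteq> \<Union>F
      \<and> (\<forall>U\<in>F. U \<inter> {x \<in> topspace X. f x = y} \<noteq> {}))" for n y
  have Fp: "finite (F n y) \<and> F n y \<subseteq> \<U> n \<and> {x \<in> topspace X. f x = y} \<subseteq> \<Union>(F n y)
      \<and> (\<forall>U\<in>F n y. U \<inter> {x \<in> topspace X. f x = y} \<noteq> {})" if "y \<in> topspace Y" for n y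
    unfolding F_def using someI_ex[OF exF[OF that]] .
  have Ffin: "finite (F n y)" and Fsub: "F n y \<subseteq> \<U> n" if "y \<in> topspace Y" for n y
    using Fp[OF that] by auto
  define Ob where "Ob (n::nat) y = (topspace Y - f ` (topspace X - \<Union>(F n y))) \<inter> (\<Inter>U\<in>F n y. f ` U)" for n y
  have Oopen: "openin Y (Ob n y)" if "y \<in> topspace Y" for n y
  proof -
    have FU: "\<And>U. U \<in> F n y \<Longrightarrow> openin X U" using Fp[OF that] H by blast
    have "openin X (\<Union>(F n y))" using FU by (rule openin_Union)
    then have "closedin X (topspace X - \<Union>(F n y))" by (rule closedin_diff[OF closedin_topspace])
    then have o1: "openin Y (topspace Y - f ` (topspace X - \<Union>(F n y)))"
      by (rule openin_diff[OF openin_topspace cm])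
    have o2: "openin Y ((\<Inter>U\<in>F n y. f ` U) \<inter> topspace Y)"
    proof (rule openin_INT)
      show "finite (F n y)" using Fp[OF that] by blast
      fix U assume "U \<in> F n y"
      then show "openin Y (f ` U)" using FU om by blast
    qed
    have "Ob n y = (topspace Y - f ` (topspace X - \<Union>(F n y))) \<inter> ((\<Inter>U\<in>F n y. f ` U) \<inter> topspace Y)"
      unfolding Ob_def by auto
    with o1 o2 show ?thesis by (simp add: openin_Int)
  qed
  have Oin: "y \<in> Ob n y" if "y \<in> topspace Y" for n y
  proof -
    have "y \<notin> f ` (topspace X - \<Union>(F n y))" using Fp[OF that] by blast
    moreover have "\<forall>U\<in>F n y. y \<in> f ` U" using Fp[OF that] by blast
    ultimately show ?thesis using that unfolding Ob_def by blast
  qed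
  have Ofib: "x \<in> \<Union>(F n y)" if "z \<in> Ob n y" "x \<in> topspace X" "f x = z" for n y z x
    using that unfolding Ob_def by blast
  have Oimg: "z \<in> f ` U" if "z \<in> Ob n y" "U \<in> F n y" for n y z U
    using that unfolding Ob_def by blast
  define V where "V (n::nat) = Ob n ` topspace Y" for n
  have fA: "f ` A \<subseteq> topspace Y" using H continuous_map_image_subset_topspace[OF cont] by blast
  have Vcov: "Y closure_of (f ` A) \<subseteq> \<Union>(V n)" for n
    using closure_of_subset_topspace[of Y "f ` A"] Oin unfolding V_def by blast
  have Vo: "\<forall>V\<in>V n. openin Y V" for n unfolding V_def using Oopen by blast
  have pre: "f ` A \<noteq> {} \<and> f ` A \<subseteq> topspace Y \<and>
        (\<forall>n. (\<forall>V \<in> V n. openin Y V) \<and> Y closure_of (f ` A) \<subseteq> \<Union>(V n))"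
    using H fA Vcov Vo by simp
  obtain W :: "nat \<Rightarrow> 'b set set" where W: "\<forall>n. finite (W n) \<and> W n \<subseteq> V n"
    and Wev: "\<forall>y \<in> f ` A. eventually (\<lambda>n. y \<in> star (\<Union>(W n)) (V n)) sequentially"
    using assms(3)[unfolded set_star_Hurewicz_def, rule_format, OF pre] by blast
  have "\<exists>S. finite S \<and> S \<subseteq> topspace Y \<and> W n = Ob n ` S" for n
    using W finite_subset_image[of "W n" "Ob n" "topspace Y"] unfolding V_def by metis
  then obtain S where S: "\<And>n. finite (S n) \<and> S n \<subseteq> topspace Y \<and> W n = Ob n ` S n" by metis
  define V' where "V' n = \<Union>(F n ` S n)" for n
  show "\<exists>\<V>. (\<forall>n. finite (\<V> n) \<and> \<V> n \<subseteq> \<U> n) \<and>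
             (\<forall>x \<in> A. eventually (\<lambda>n. x \<in> star (\<Union>(\<V> n)) (\<U> n)) sequentially)"
  proof (intro exI[of _ V'] conjI allI ballI)
    fix n
    have "\<And>s. s \<in> S n \<Longrightarrow> finite (F n s)" using S Ffin by blast
    then show "finite (V' n)" unfolding V'_def using S by blast
    have "\<And>s. s \<in> S n \<Longrightarrow> F n s \<subseteq> \<U> n" using S Fsub by blast
    then show "V' n \<subseteq> \<U> n" unfolding V'_def by blast
  next
    fix x assume xA: "x \<in> A"
    have xX: "x \<in> topspace X" using xA H by blast
    have "eventually (\<lambda>n. f x \<in> star (\<Union>(W n)) (V n)) sequentially" using Wev xA by blast
    then show "eventually (\<lambda>n. x \<in> star (\<Union>(V' n)) (\<U> n)) sequentially"
    proof (rule eventually_mono)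
      fix n assume "f x \<in> star (\<Union>(W n)) (V n)"
      then obtain V0 where V0: "V0 \<in> V n" "f x \<in> V0" "V0 \<inter> \<Union>(W n) \<noteq> {}"
        unfolding star_def by blast
      then obtain y' where y': "y' \<in> topspace Y" "V0 = Ob n y'" unfolding V_def by blast
      from V0(3) obtain z W0 where z: "z \<in> V0" "W0 \<in> W n" "z \<in> W0" by blast
      from z(2) S[of n] obtain s where s0: "s \<in> S n" "W0 = Ob n s" by blast
      have y'': "f x \<in> Ob n y'" "z \<in> Ob n y'" using V0 z y' by auto
      have s: "s \<in> S n" "z \<in> Ob n s" using s0 z by auto
      obtain U where U: "U \<in> F n y'" "x \<in> U" using Ofib[OF y''(1) xX] by blast
      obtain w where w: "w \<in> U" "f w = z" using Oimg[OF y''(2) U(1)] by blast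
      have UU: "U \<in> \<U> n" using Fsub[OF y'(1)] U by blast
      then have "openin X U" using H by blast
      then have "w \<in> topspace X" using w(1) openin_subset by blast
      then have "w \<in> \<Union>(F n s)" using Ofib[OF s(2) _ w(2)] by blast
      then have "w \<in> \<Union>(V' n)" using s unfolding V'_def by blast
      then show "x \<in> star (\<Union>(V' n)) (\<U> n)"
        unfolding star_def using UU U w by blast
    qed
  qed
qed

end
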